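(* Let $\bm y=\bm X\bm\beta+\bm z$, where $\bm X=[\bm x_1,\dots,\bm x_p]\in\mathbb{R}^{n\times p}$ is deterministic of full column rank with unit-norm columns, $\bm\beta\in\mathbb{R}^p$, and $\bm z\sim N_n(\bm 0,\sigma^2\bm I_n)$. Fix $M\ge1$, and for each $j\in[p]$ let $\widetilde{\bm x}_j^{(1)},\dots,\widetilde{\bm x}_j^{(M)}\in\mathbb{R}^n$ be fixed vectors (not depending on $\bm z$) such that, for some constant $s_j$ and each $m\in[M]$: $\bm x_i^\top\widetilde{\bm x}_j^{(m)}=\bm x_i^\top\bm x_j$ for $i\ne j$; $\bm x_j^\top\widetilde{\bm x}_j^{(m)}=1-s_j$; $(\widetilde{\bm x}_j^{(m)})^\top\widetilde{\bm x}_j^{(m)}=1$; and $(\widetilde{\bm x}_j^{(m)})^\top\widetilde{\bm x}_j^{(\ell)}=1-s_j$ for $\ell\ne m$. Fix $\lambda\ge0$. Let $\widehat\beta_j^{(0)}$ be the coefficient of $\bm x_j$ in the ridge regression with penalty $\lambda$ (ordinary least squares if $\lambda=0$) of $\bm y$ onto $\bm X$, and for $m\in[M]$ let $\widehat\beta_j^{(m)}$ be the coefficient of $\widetilde{\bm x}_j^{(m)}$ in the ridge regression with the same penalty of $\bm y$ onto $\bm X$ with its $j$-th column replaced by $\widetilde{\bm x}_j^{(m)}$. Define $$p_j=\frac{1+\sum_{m=1}^M\mathbf{1}\{|\widehat\beta_j^{(m)}|\ge|\widehat\beta_j^{(0)}|\}}{M+1}.$$ Suppose that for each $j\in[p]$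 there are almost surely no ties among $\widehat\beta_j^{(0)},\widehat\beta_j^{(1)},\dots,\widehat\beta_j^{(M)}$. Then for every $j$ with $\beta_j=0$, $p_j$ is uniformly distributed on $\{\frac1{M+1},\frac2{M+1},\dots,1\}$. *)

theory Defs
  imports "HOL-Probability.Probability"
begin

text \<open>Vectors in R^n are functions nat => real, only indices < n matter.
  A design with p columns is a function cols :: nat => (nat => real), column k = cols k.\<close>

definition inner_n :: "nat \<Rightarrow> (nat \<Rightarrow> real) \<Rightarrow> (nat \<Rightarrow> real) \<Rightarrow> real" where
  "inner_n n u v = (\<Sum>i<n. u i * v i)"

definition full_column_rank :: "nat \<Rightarrow> nat \<Rightarrow> (nat \<Rightarrow> nat \<Rightarrow> real) \<Rightarrow> bool" where
  "full_column_rank n p cols \<longleftrightarrow>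
     (\<forall>c :: nat \<Rightarrow> real. (\<forall>i<n. (\<Sum>k<p. c k * cols k i) = 0) \<longrightarrow> (\<forall>k<p. c k = 0))"

definition ridge_obj :: "nat \<Rightarrow> nat \<Rightarrow> real \<Rightarrow> (nat \<Rightarrow> real) \<Rightarrow> (nat \<Rightarrow> nat \<Rightarrow> real) \<Rightarrow> (nat \<Rightarrow> real) \<Rightarrow> real" where
  "ridge_obj n p lam y cols b =
     (\<Sum>i<n. (y i - (\<Sum>k<p. b k * cols k i))\<^sup>2) + lam * (\<Sum>k<p. (b k)\<^sup>2)"

definition ridge_coef :: "nat \<Rightarrow> nat \<Rightarrow> real \<Rightarrow> (nat \<Rightarrow> real) \<Rightarrow> (nat \<Rightarrow> nat \<Rightarrow> real) \<Rightarrow> (nat \<Rightarrow> real)" where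
  "ridge_coef n p lam y cols =
     (THE b. (\<forall>k\<ge>p. b k = 0) \<and>
             (\<forall>b'. (\<forall>k\<ge>p. b' k = 0) \<longrightarrow> ridge_obj n p lam y cols b \<le> ridge_obj n p lam y cols b'))"

definition gauss_noise :: "nat \<Rightarrow> real \<Rightarrow> (nat \<Rightarrow> real) measure" where
  "gauss_noise n \<sigma> = PiM {..<n} (\<lambda>_. density lborel (normal_density 0 \<sigma>))"

definition response :: "nat \<Rightarrow> (nat \<Rightarrow> nat \<Rightarrow> real) \<Rightarrow> (nat \<Rightarrow> real) \<Rightarrow> (nat \<Rightarrow> real) \<Rightarrow> (nat \<Rightarrow> real)" where
  "response p cols \<beta> z = (\<lambda>i. (\<Sum>k<p. \<beta> k * cols k i) + z i)"

definition bhat :: "nat \<Rightarrow> nat \<Rightarrow> real \<Rightarrow> (nat \<Rightarrow> nat \<Rightarrow> real) \<Rightarrow> (nat \<Rightarrow> nat \<Rightarrow> nat \<Rightarrow> real)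
                     \<Rightarrow> (nat \<Rightarrow> real) \<Rightarrow> nat \<Rightarrow> nat \<Rightarrow> (nat \<Rightarrow> real) \<Rightarrow> real" where
  "bhat n p lam cols xt \<beta> j m z =
     (if m = 0 then ridge_coef n p lam (response p cols \<beta> z) cols j
      else ridge_coef n p lam (response p cols \<beta> z) (cols(j := xt j m)) j)"

definition pval :: "nat \<Rightarrow> nat \<Rightarrow> real \<Rightarrow> (nat \<Rightarrow> nat \<Rightarrow> real) \<Rightarrow> (nat \<Rightarrow> nat \<Rightarrow> nat \<Rightarrow> real)
                     \<Rightarrow> (nat \<Rightarrow> real) \<Rightarrow> nat \<Rightarrow> nat \<Rightarrow> (nat \<Rightarrow> real) \<Rightarrow> real" where
  "pval n p lam cols xt \<beta> M j z =
     (1 + real (card {m \<in> {1..M}. \<bar>bhat n p lam cols xt \<beta> j m z\<bar> \<ge> \<bar>bhat n p lam cols xt \<beta> j 0 z\<bar>}))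
       / (real M + 1)"

end

theory Submission
  imports Defs "Jordan_Normal_Form.Determinant"
begin

abbreviation LB :: "'i set \<Rightarrow> ('i \<Rightarrow> real) measure" where
  "LB I \<equiv> PiM I (\<lambda>_. lborel)"

lemma upd_meas[measurable]:
  fixes I :: "'i set" and g :: "('i \<Rightarrow> real) \<Rightarrow> real"
  assumes a: "a \<in> I" and g[measurable]: "g \<in> borel_measurable (LB I)"
  shows "(\<lambda>z. (\<lambda>i\<in>I. if i = a then \<alpha> * z a + g z else z i)) \<in> measurable (LB I) (LB I)"
proof (rule measurable_restrict)
  fix i assume "i \<in> I"
  then show "(\<lambda>x. if i = a then \<alpha> * x a + g x else x i) \<in> measurable (LB I) lborel"
    using a by (cases "i = a") simp_all
qed

lemma lb_update:
  fixes I :: "'i set" and g :: "('i \<Rightarrow> real) \<Rightarrow> real"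
  assumes I: "finite I" and a: "a \<in> I" and \<alpha>: "\<alpha> \<noteq> 0"
    and g[measurable]: "g \<in> borel_measurable (LB I)"
    and gi: "\<And>z y. g (z(a := y)) = g z"
    and F[measurable]: "F \<in> borel_measurable (LB I)"
  shows "(\<integral>\<^sup>+z. F (\<lambda>i\<in>I. if i = a then \<alpha> * z a + g z else z i) \<partial>LB I)
         = ennreal (1/\<bar>\<alpha>\<bar>) * (\<integral>\<^sup>+z. F z \<partial>LB I)"
proof -
  interpret product_sigma_finite "\<lambda>_. lborel :: real measure" by standard
  have I': "I = insert a (I - {a})" using a by auto
  have fI: "finite (I - {a})" using I by auto
  let ?T = "\<lambda>z. (\<lambda>i\<in>I. if i = a then \<alpha> * z a + g z else z i)"
  have Tm[measurable]: "?T \<in> measurable (LB I) (LB I)"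
  proof (rule measurable_restrict)
    fix i assume "i \<in> I"
    then show "(\<lambda>x. if i = a then \<alpha> * x a + g x else x i) \<in> measurable (LB I) lborel"
      using a by (cases "i = a") simp_all
  qed
  have m1: "(\<lambda>z. F (?T z)) \<in> borel_measurable (PiM (insert a (I - {a})) (\<lambda>_. lborel))"
    by (subst I'[symmetric]) (rule measurable_compose[OF Tm F])
  have m2: "F \<in> borel_measurable (PiM (insert a (I - {a})) (\<lambda>_. lborel))"
    by (subst I'[symmetric]) (rule F)
  have "(\<integral>\<^sup>+z. F (?T z) \<partial>LB I) = (\<integral>\<^sup>+x. (\<integral>\<^sup>+y. F (?T (x(a := y))) \<partial>lborel) \<partial>LB (I - {a}))"
    using product_nn_integral_insert[OF fI _ m1] I' by simp
  also have "\<dots> = (\<integral>\<^sup>+x. (\<integral>\<^sup>+y. F (x(a := g x + \<alpha> * y)) \<partial>lborel) \<partial>LB (I - {a}))"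
  proof (intro nn_integral_cong)
    fix x y assume x: "x \<in> space (LB (I - {a}))"
    have "?T (x(a := y)) = x(a := g x + \<alpha> * y)"
      using x a by (auto simp: gi space_PiM PiE_def extensional_def fun_eq_iff)
    then show "F (?T (x(a := y))) = F (x(a := g x + \<alpha> * y))" by simp
  qed
  also have "\<dots> = (\<integral>\<^sup>+x. ennreal (1/\<bar>\<alpha>\<bar>) * (\<integral>\<^sup>+y. F (x(a := y)) \<partial>lborel) \<partial>LB (I - {a}))"
  proof (intro nn_integral_cong)
    fix x assume x: "x \<in> space (LB (I - {a}))"
    have mx: "(\<lambda>y. F (x(a := y))) \<in> borel_measurable borel"
    proof -
      have "(\<lambda>y. x(a := y)) \<in> measurable borel (LB I)"
        using x a by (subst I') (auto intro!: measurable_PiM_single' simp: space_PiM PiE_def extensional_def)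
      then show ?thesis using F by (simp add: measurable_compose[of _ borel "LB I"])
    qed
    have "(\<integral>\<^sup>+y. F (x(a := y)) \<partial>lborel) = ennreal \<bar>\<alpha>\<bar> * (\<integral>\<^sup>+y. F (x(a := g x + \<alpha> * y)) \<partial>lborel)"
      using nn_integral_real_affine[OF mx \<alpha>, of "g x"] by simp
    then have "ennreal (1/\<bar>\<alpha>\<bar>) * (\<integral>\<^sup>+y. F (x(a := y)) \<partial>lborel)
       = (ennreal (1/\<bar>\<alpha>\<bar>) * ennreal \<bar>\<alpha>\<bar>) * (\<integral>\<^sup>+y. F (x(a := g x + \<alpha> * y)) \<partial>lborel)"
      by (simp add: mult.assoc)
    also have "ennreal (1/\<bar>\<alpha>\<bar>) * ennreal \<bar>\<alpha>\<bar> = 1"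
      using \<alpha> by (simp add: ennreal_mult[symmetric])
    finally show "(\<integral>\<^sup>+y. F (x(a := g x + \<alpha> * y)) \<partial>lborel) = ennreal (1/\<bar>\<alpha>\<bar>) * (\<integral>\<^sup>+y. F (x(a := y)) \<partial>lborel)"
      by (simp only: mult_1_left)
  qed
  also have "\<dots> = ennreal (1/\<bar>\<alpha>\<bar>) * (\<integral>\<^sup>+x. (\<integral>\<^sup>+y. F (x(a := y)) \<partial>lborel) \<partial>LB (I - {a}))"
  proof (rule nn_integral_cmult)
    show "(\<lambda>x. \<integral>\<^sup>+ y. F (x(a := y)) \<partial>lborel) \<in> borel_measurable (LB (I - {a}))"
    proof (rule lborel.borel_measurable_nn_integral)
      have "(\<lambda>p. F ((\<lambda>(f, y). f(a := y)) p)) \<in> borel_measurable (LB (I - {a}) \<Otimes>\<^sub>M lborel)"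
        by (rule measurable_compose[OF measurable_add_dim m2])
      then show "(\<lambda>(x, y). F (x(a := y))) \<in> borel_measurable (LB (I - {a}) \<Otimes>\<^sub>M lborel)"
        by (simp add: case_prod_beta')
    qed
  qed
  also have "(\<integral>\<^sup>+x. (\<integral>\<^sup>+y. F (x(a := y)) \<partial>lborel) \<partial>LB (I - {a})) = (\<integral>\<^sup>+z. F z \<partial>LB I)"
    using product_nn_integral_insert[OF fI _ m2] I' by simp
  finally show ?thesis .
qed

definition gdens :: "real \<Rightarrow> 'i set \<Rightarrow> ('i \<Rightarrow> real) \<Rightarrow> real" where
  "gdens \<sigma> I z = (\<Prod>i\<in>I. normal_density 0 \<sigma> (z i))"

lemma gdens_meas[measurable]: "finite I \<Longrightarrow> gdens \<sigma> I \<in> borel_measurable (LB I)"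
  unfolding gdens_def by measurable

lemma PiM_gauss_density:
  fixes I :: "'i set"
  assumes I: "finite I" and \<sigma>: "\<sigma> > 0"
  shows "PiM I (\<lambda>_. density lborel (\<lambda>x. ennreal (normal_density 0 \<sigma> x)))
         = density (LB I) (\<lambda>z. ennreal (gdens \<sigma> I z))"
proof -
  let ?N = "density lborel (\<lambda>x. ennreal (normal_density 0 \<sigma> x))"
  interpret N: prob_space ?N using prob_space_normal_density[OF \<sigma>] .
  interpret product_sigma_finite "\<lambda>_. ?N" by standard
  interpret L: product_sigma_finite "\<lambda>_. lborel :: real measure" by standard
  show ?thesis
  proof (rule PiM_eqI[symmetric])
    show "finite I" by fact
    show "sets (density (LB I) (\<lambda>z. ennreal (gdens \<sigma> I z))) = sets (PiM I (\<lambda>_. ?N))"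
      unfolding sets_density by (intro sets_PiM_cong) simp_all
  next
    fix A assume A: "\<And>i. i \<in> I \<Longrightarrow> A i \<in> sets ?N"
    then have A': "\<And>i. i \<in> I \<Longrightarrow> A i \<in> sets borel" by simp
    have PA: "Pi\<^sub>E I A \<in> sets (LB I)"
      using A' I by (intro sets_PiM_I_finite) auto
    have "emeasure (density (LB I) (\<lambda>z. ennreal (gdens \<sigma> I z))) (Pi\<^sub>E I A)
        = (\<integral>\<^sup>+z. ennreal (gdens \<sigma> I z) * indicator (Pi\<^sub>E I A) z \<partial>LB I)"
      using PA I by (subst emeasure_density) auto
    also have "\<dots> = (\<integral>\<^sup>+z. (\<Prod>i\<in>I. ennreal (normal_density 0 \<sigma> (z i)) * indicator (A i) (z i)) \<partial>LB I)"
    proof (intro nn_integral_cong)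
      fix z assume z: "z \<in> space (LB I)"
      have ind: "indicator (Pi\<^sub>E I A) z = (\<Prod>i\<in>I. indicator (A i) (z i) :: ennreal)"
      proof (cases "z \<in> Pi\<^sub>E I A")
        case True then show ?thesis by (auto simp: indicator_def PiE_def intro!: prod.neutral)
      next
        case False
        then obtain i where "i \<in> I" "z i \<notin> A i" using z by (auto simp: space_PiM PiE_def)
        then show ?thesis using False I by (auto simp: indicator_def intro!: prod_zero)
      qed
      show "ennreal (gdens \<sigma> I z) * indicator (Pi\<^sub>E I A) z
          = (\<Prod>i\<in>I. ennreal (normal_density 0 \<sigma> (z i)) * indicator (A i) (z i))"
        unfolding ind gdens_def prod.distrib
        by (simp add: prod_ennreal normal_density_nonneg)
    qed
    also have "\<dots> = (\<Prod>i\<in>I. \<integral>\<^sup>+x. ennreal (normal_density 0 \<sigma> x) * indicator (A i) x \<partial>lborel)"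
      using I A' by (subst L.product_nn_integral_prod) auto
    also have "\<dots> = (\<Prod>i\<in>I. emeasure ?N (A i))"
      using A' by (intro prod.cong refl) (simp add: emeasure_density)
    finally show "emeasure (density (LB I) (\<lambda>z. ennreal (gdens \<sigma> I z))) (Pi\<^sub>E I A) = (\<Prod>i\<in>I. emeasure ?N (A i))" .
  qed
qed

lemma restrict_space_id: "z \<in> space (LB I) \<Longrightarrow> (\<lambda>i\<in>I. z i) = z"
  by (auto simp: space_PiM PiE_def extensional_def fun_eq_iff)

lemma lb_shear:
  fixes I :: "'i set"
  assumes I: "finite I" and a: "a \<in> I" and J: "J \<subseteq> I - {a}"
  shows "F \<in> borel_measurable (LB I) \<Longrightarrow>
    (\<integral>\<^sup>+z. F (\<lambda>i\<in>I. if i \<in> J then z i + c i * z a else z i) \<partial>LB I) = (\<integral>\<^sup>+z. F z \<partial>LB I)"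
proof -
  have "finite J" using J I by (meson finite_Diff finite_subset)
  then show "F \<in> borel_measurable (LB I) \<Longrightarrow> ?thesis" using J
  proof (induction J arbitrary: F)
    case empty
    show ?case by (intro nn_integral_cong) (simp add: restrict_space_id)
  next
    case (insert j J)
    note F = insert.prems(1)
    have j: "j \<in> I" "j \<noteq> a" using insert.prems(2) by auto
    have JJ: "J \<subseteq> I - {a}" using insert.prems(2) by auto
    let ?g = "\<lambda>w. c j * w a"
    have gm: "?g \<in> borel_measurable (LB I)" using a by measurable
    let ?S1 = "\<lambda>w. (\<lambda>i\<in>I. if i = j then 1 * w j + ?g w else w i)"
    have S1m: "?S1 \<in> measurable (LB I) (LB I)" by (rule upd_meas[OF j(1) gm])
    have FS1: "(\<lambda>w. F (?S1 w)) \<in> borel_measurable (LB I)"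
      by (rule measurable_compose[OF S1m F])
    have "(\<integral>\<^sup>+z. F (\<lambda>i\<in>I. if i \<in> insert j J then z i + c i * z a else z i) \<partial>LB I)
        = (\<integral>\<^sup>+z. F (?S1 (\<lambda>i\<in>I. if i \<in> J then z i + c i * z a else z i)) \<partial>LB I)"
    proof (intro nn_integral_cong arg_cong[where f=F])
      fix z assume z: "z \<in> space (LB I)"
      show "(\<lambda>i\<in>I. if i \<in> insert j J then z i + c i * z a else z i)
          = ?S1 (\<lambda>i\<in>I. if i \<in> J then z i + c i * z a else z i)"
        using j a JJ insert.hyps(2) by (auto simp: fun_eq_iff)
    qed
    also have "\<dots> = (\<integral>\<^sup>+w. F (?S1 w) \<partial>LB I)"
      by (rule insert.IH[OF FS1 JJ])
    also have "\<dots> = ennreal (1/\<bar>1\<bar>) * (\<integral>\<^sup>+w. F w \<partial>LB I)"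
      by (rule lb_update[OF I j(1) _ gm _ F]) (use j in auto)
    also have "ennreal (1/\<bar>1::real\<bar>) * (\<integral>\<^sup>+w. F w \<partial>LB I) = (\<integral>\<^sup>+w. F w \<partial>LB I)" by simp
    finally show ?case .
  qed
qed

definition hrefl :: "nat \<Rightarrow> (nat \<Rightarrow> real) \<Rightarrow> (nat \<Rightarrow> real) \<Rightarrow> (nat \<Rightarrow> real)" where
  "hrefl n u z = (\<lambda>i\<in>{..<n}. z i - 2 * (inner_n n u z / inner_n n u u) * u i)"

lemma refl_meas[measurable]: "hrefl n u \<in> measurable (LB {..<n}) (LB {..<n})"
  unfolding hrefl_def inner_n_def by measurable

lemma refl_point:
  fixes u z :: "nat \<Rightarrow> real" and a n :: nat
  defines "I \<equiv> {..<n}"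
  defines "N \<equiv> inner_n n u u"
  assumes a: "a < n" and ua: "u a \<noteq> 0" and N: "N \<noteq> 0"
  defines "g1 \<equiv> \<lambda>z. (\<Sum>i\<in>I - {a}. u i * z i)"
  defines "c \<equiv> \<lambda>i. - 2 * u i / N"
  defines "g3 \<equiv> \<lambda>w. - (\<Sum>i\<in>I - {a}. u i * w i) / u a"
  shows "hrefl n u z =
    (\<lambda>w. \<lambda>i\<in>I. if i = a then (-1 / u a) * w a + g3 w else w i)
     ((\<lambda>w. \<lambda>i\<in>I. if i \<in> I - {a} then w i + c i * w a else w i)
      ((\<lambda>i\<in>I. if i = a then u a * z a + g1 z else z i)))"
proof -
  have aI: "a \<in> I" using a by (simp add: I_def)
  have fI: "finite I" by (simp add: I_def)
  have t: "inner_n n u z = u a * z a + g1 z"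
    unfolding inner_n_def g1_def I_def[symmetric] using sum.remove[OF fI aI, of "\<lambda>i. u i * z i"] .
  have Ns: "N = u a * u a + (\<Sum>i\<in>I - {a}. u i * u i)"
    unfolding N_def inner_n_def I_def[symmetric] using sum.remove[OF fI aI, of "\<lambda>i. u i * u i"] .
  define t where "t = u a * z a + g1 z"
  have s3: "(\<Sum>i\<in>I - {a}. u i * (z i + c i * t))
      = g1 z + t * (- 2 * (N - u a * u a) / N)"
  proof -
    have "(\<Sum>i\<in>I - {a}. u i * (z i + c i * t))
        = (\<Sum>i\<in>I - {a}. u i * z i + t * (- 2 / N) * (u i * u i))"
      by (intro sum.cong refl) (auto simp: c_def field_simps)
    also have "\<dots> = g1 z + t * (- 2 / N) * (\<Sum>i\<in>I - {a}. u i * u i)"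
      by (simp only: sum.distrib g1_def sum_distrib_left)
    also have "\<dots> = g1 z + t * (- 2 * (N - u a * u a) / N)"
      using Ns by simp
    finally show ?thesis .
  qed
  show ?thesis (is "_ = ?R")
  proof (rule ext)
    fix i
    show "hrefl n u z i = ?R i"
    proof (cases "i \<in> I")
      case False then show ?thesis by (simp add: hrefl_def I_def)
    next
      case True
      show ?thesis
      proof (cases "i = a")
        case False
        then show ?thesis using True aI
          by (simp add: hrefl_def I_def[symmetric] N_def[symmetric] t c_def field_simps)
      next
        case ia: True
        define w where "w = (\<lambda>w. \<lambda>i\<in>I. if i \<in> I - {a} then w i + c i * w a else w i)
            ((\<lambda>i\<in>I. if i = a then u a * z a + g1 z else z i))"
        have wa: "w a = t" using aI by (simp add: w_def t_def)
        have ws: "(\<Sum>i\<in>I - {a}. u i * w i) = (\<Sum>i\<in>I - {a}. u i * (z i + c i * t))"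
          using aI by (intro sum.cong refl) (auto simp: w_def t_def)
        have "?R a = (-1 / u a) * t - (\<Sum>i\<in>I - {a}. u i * (z i + c i * t)) / u a"
          using aI by (simp add: g3_def wa ws w_def[symmetric] t_def)
        also have "\<dots> = (-1 / u a) * t - (g1 z + t * (- 2 * (N - u a * u a) / N)) / u a"
          by (simp only: s3)
        also have "\<dots> = z a - 2 * (t / N) * u a"
          using ua N unfolding t_def by (simp add: field_simps)
        finally show ?thesis using ia aI t by (simp add: hrefl_def I_def[symmetric] N_def[symmetric] t_def)
      qed
    qed
  qed
qed

lemma shear_meas:
  fixes I :: "'i set"
  assumes a: "a \<in> I"
  shows "(\<lambda>z. (\<lambda>i\<in>I. if i \<in> J then z i + c i * z a else z i)) \<in> measurable (LB I) (LB I)"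
proof (rule measurable_restrict)
  fix i assume "i \<in> I"
  then show "(\<lambda>x. if i \<in> J then x i + c i * x a else x i) \<in> measurable (LB I) lborel"
    using a by (cases "i \<in> J") simp_all
qed

lemma lb_refl:
  assumes F[measurable]: "F \<in> borel_measurable (LB {..<n})"
  shows "(\<integral>\<^sup>+z. F (hrefl n u z) \<partial>LB {..<n}) = (\<integral>\<^sup>+z. F z \<partial>LB {..<n})"
proof (cases "inner_n n u u = 0")
  case True
  then show ?thesis
    by (intro nn_integral_cong) (simp add: hrefl_def restrict_space_id)
next
  case N: False
  obtain a where a: "a < n" and ua: "u a \<noteq> 0"
  proof -
    have "\<not> (\<forall>i<n. u i = 0)"
    proof
      assume "\<forall>i<n. u i = 0"
      then have "inner_n n u u = 0" by (simp add: inner_n_def)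
      with N show False by simp
    qed
    then show ?thesis using that by auto
  qed
  let ?I = "{..<n}"
  have aI: "a \<in> ?I" using a by simp
  let ?g1 = "\<lambda>z. (\<Sum>i\<in>?I - {a}. u i * z i)"
  let ?c = "\<lambda>i. - 2 * u i / inner_n n u u"
  let ?g3 = "\<lambda>w. - (\<Sum>i\<in>?I - {a}. u i * w i) / u a"
  let ?T1 = "\<lambda>z. (\<lambda>i\<in>?I. if i = a then u a * z a + ?g1 z else z i)"
  let ?S = "\<lambda>w. (\<lambda>i\<in>?I. if i \<in> ?I - {a} then w i + ?c i * w a else w i)"
  let ?T3 = "\<lambda>w. (\<lambda>i\<in>?I. if i = a then (-1 / u a) * w a + ?g3 w else w i)"
  have g1m: "?g1 \<in> borel_measurable (LB ?I)" by measurable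
  have g3m: "?g3 \<in> borel_measurable (LB ?I)" by measurable
  have T3m: "?T3 \<in> measurable (LB ?I) (LB ?I)" by (rule upd_meas[OF aI g3m])
  have Sm: "?S \<in> measurable (LB ?I) (LB ?I)" by (rule shear_meas[OF aI])
  have FT3: "(\<lambda>w. F (?T3 w)) \<in> borel_measurable (LB ?I)" by (rule measurable_compose[OF T3m F])
  have FT3S: "(\<lambda>w. F (?T3 (?S w))) \<in> borel_measurable (LB ?I)" by (rule measurable_compose[OF Sm FT3])
  have "(\<integral>\<^sup>+z. F (hrefl n u z) \<partial>LB ?I) = (\<integral>\<^sup>+z. F (?T3 (?S (?T1 z))) \<partial>LB ?I)"
    using refl_point[OF a ua N] by simp
  also have "\<dots> = ennreal (1/\<bar>u a\<bar>) * (\<integral>\<^sup>+w. F (?T3 (?S w)) \<partial>LB ?I)"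
    by (rule lb_update[OF _ aI ua g1m _ FT3S]) (auto intro!: sum.cong)
  also have "(\<integral>\<^sup>+w. F (?T3 (?S w)) \<partial>LB ?I) = (\<integral>\<^sup>+w. F (?T3 w) \<partial>LB ?I)"
    by (rule lb_shear[OF _ aI _ FT3]) auto
  also have "(\<integral>\<^sup>+w. F (?T3 w) \<partial>LB ?I) = ennreal (1/\<bar>-1 / u a\<bar>) * (\<integral>\<^sup>+w. F w \<partial>LB ?I)"
    by (rule lb_update[OF _ aI _ g3m _ F]) (use ua in \<open>auto intro!: sum.cong\<close>)
  also have "ennreal (1/\<bar>u a\<bar>) * (ennreal (1/\<bar>-1 / u a\<bar>) * (\<integral>\<^sup>+w. F w \<partial>LB ?I))
      = (ennreal (1/\<bar>u a\<bar>) * ennreal (1/\<bar>-1 / u a\<bar>)) * (\<integral>\<^sup>+w. F w \<partial>LB ?I)"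
    by (simp only: mult.assoc)
  also have "ennreal (1/\<bar>u a\<bar>) * ennreal (1/\<bar>-1 / u a\<bar>) = 1"
    using ua by (simp add: ennreal_mult[symmetric] abs_divide)
  finally show ?thesis by (simp only: mult_1_left)
qed

lemma gdens_eq:
  assumes "finite I"
  shows "gdens \<sigma> I z = (1 / sqrt (2 * pi * \<sigma>\<^sup>2)) ^ card I * exp (- (\<Sum>i\<in>I. (z i)\<^sup>2) / (2 * \<sigma>\<^sup>2))"
proof -
  have "gdens \<sigma> I z = (1 / sqrt (2 * pi * \<sigma>\<^sup>2)) ^ card I * (\<Prod>i\<in>I. exp (-(z i)\<^sup>2 / (2 * \<sigma>\<^sup>2)))"
    by (simp only: gdens_def normal_density_def prod.distrib prod_constant diff_zero)
  also have "(\<Prod>i\<in>I. exp (-(z i)\<^sup>2 / (2 * \<sigma>\<^sup>2))) = exp (\<Sum>i\<in>I. -(z i)\<^sup>2 / (2 * \<sigma>\<^sup>2))"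
    using assms by (simp add: exp_sum)
  also have "(\<Sum>i\<in>I. -(z i)\<^sup>2 / (2 * \<sigma>\<^sup>2)) = - (\<Sum>i\<in>I. (z i)\<^sup>2) / (2 * \<sigma>\<^sup>2)"
    by (simp add: sum_divide_distrib sum_negf)
  finally show ?thesis .
qed

lemma refl_norm: "(\<Sum>i<n. (hrefl n u z i)\<^sup>2) = (\<Sum>i<n. (z i)\<^sup>2)"
proof -
  define t where "t = inner_n n u z"
  define N where "N = inner_n n u u"
  define k where "k = 2 * (t / N)"
  have "(\<Sum>i<n. (hrefl n u z i)\<^sup>2) = (\<Sum>i<n. (z i - k * u i)\<^sup>2)"
    by (simp add: hrefl_def k_def t_def N_def)
  also have "\<dots> = (\<Sum>i<n. (z i)\<^sup>2 - 2 * k * (u i * z i) + k\<^sup>2 * (u i * u i))"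
    by (intro sum.cong refl) (simp add: power2_eq_square algebra_simps)
  also have "\<dots> = (\<Sum>i<n. (z i)\<^sup>2) - 2 * k * t + k\<^sup>2 * N"
    by (simp add: sum.distrib sum_subtractf sum_distrib_left[symmetric] t_def N_def inner_n_def)
  also have "- 2 * k * t + k\<^sup>2 * N = 0"
    by (cases "N = 0") (simp_all add: k_def power2_eq_square field_simps)
  then have "(\<Sum>i<n. (z i)\<^sup>2) - 2 * k * t + k\<^sup>2 * N = (\<Sum>i<n. (z i)\<^sup>2)" by simp
  finally show ?thesis .
qed

lemma gdens_refl: "gdens \<sigma> {..<n} (hrefl n u z) = gdens \<sigma> {..<n} z"
  by (simp add: gdens_eq refl_norm)

lemma gauss_refl_emeasure:
  assumes \<sigma>: "\<sigma> > 0" and A: "A \<in> sets (gauss_noise n \<sigma>)"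
  shows "emeasure (gauss_noise n \<sigma>) (hrefl n u -` A \<inter> space (gauss_noise n \<sigma>)) = emeasure (gauss_noise n \<sigma>) A"
proof -
  let ?L = "LB {..<n}"
  let ?p = "\<lambda>z. ennreal (gdens \<sigma> {..<n} z)"
  have G: "gauss_noise n \<sigma> = density ?L ?p"
    unfolding gauss_noise_def using PiM_gauss_density[OF _ \<sigma>, of "{..<n}"] by simp
  have A': "A \<in> sets ?L" using A G by simp
  have B: "hrefl n u -` A \<inter> space ?L \<in> sets ?L"
    using A' by measurable
  have "emeasure (density ?L ?p) (hrefl n u -` A \<inter> space ?L) = (\<integral>\<^sup>+z. ?p z * indicator (hrefl n u -` A \<inter> space ?L) z \<partial>?L)"
    using B by (simp add: emeasure_density)
  also have "\<dots> = (\<integral>\<^sup>+z. (\<lambda>w. ?p w * indicator A w) (hrefl n u z) \<partial>?L)"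
    by (intro nn_integral_cong) (simp add: gdens_refl indicator_def)
  also have "\<dots> = (\<integral>\<^sup>+w. ?p w * indicator A w \<partial>?L)"
    by (rule lb_refl) (use A' in measurable)
  also have "\<dots> = emeasure (density ?L ?p) A"
    using A' by (simp add: emeasure_density)
  finally show ?thesis using G by simp
qed

lemma gauss_refl_measure:
  assumes \<sigma>: "\<sigma> > 0" and A: "A \<in> sets (gauss_noise n \<sigma>)"
  shows "measure (gauss_noise n \<sigma>) (hrefl n u -` A \<inter> space (gauss_noise n \<sigma>)) = measure (gauss_noise n \<sigma>) A"
  using gauss_refl_emeasure[OF assms] by (simp add: measure_def)

definition Xv :: "nat \<Rightarrow> (nat \<Rightarrow> nat \<Rightarrow> real) \<Rightarrow> (nat \<Rightarrow> real) \<Rightarrow> (nat \<Rightarrow> real)" where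
  "Xv p D b = (\<lambda>i. \<Sum>k<p. b k * D k i)"

lemma inner_n_sym: "inner_n n u v = inner_n n v u"
  unfolding inner_n_def by (simp add: mult.commute)

lemma ridge_obj_Xv: "ridge_obj n p lam y D b = (\<Sum>i<n. (y i - Xv p D b i)\<^sup>2) + lam * (\<Sum>k<p. (b k)\<^sup>2)"
  unfolding ridge_obj_def Xv_def ..

lemma quad_eq: "(\<Sum>i<n. (Xv p D d i)\<^sup>2) = (\<Sum>k<p. \<Sum>l<p. d k * d l * inner_n n (D k) (D l))"
proof -
  have "(\<Sum>i<n. (Xv p D d i)\<^sup>2) = (\<Sum>i<n. \<Sum>k<p. \<Sum>l<p. d k * d l * (D k i * D l i))"
    unfolding Xv_def power2_eq_square sum_product by (intro sum.cong refl) (simp add: algebra_simps)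
  also have "\<dots> = (\<Sum>k<p. \<Sum>i<n. \<Sum>l<p. d k * d l * (D k i * D l i))"
    by (rule sum.swap)
  also have "\<dots> = (\<Sum>k<p. \<Sum>l<p. \<Sum>i<n. d k * d l * (D k i * D l i))"
    by (rule sum.cong[OF refl], rule sum.swap)
  also have "\<dots> = (\<Sum>k<p. \<Sum>l<p. d k * d l * inner_n n (D k) (D l))"
    by (simp add: inner_n_def sum_distrib_left)
  finally show ?thesis .
qed

lemma inner_resid:
  "inner_n n (D k) (\<lambda>i. y i - Xv p D b i) = inner_n n (D k) y - (\<Sum>l<p. b l * inner_n n (D k) (D l))"
proof -
  have "inner_n n (D k) (\<lambda>i. y i - Xv p D b i) = inner_n n (D k) y - (\<Sum>i<n. \<Sum>l<p. b l * (D k i * D l i))"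
    unfolding inner_n_def Xv_def by (simp add: algebra_simps sum_subtractf sum_distrib_left)
  also have "(\<Sum>i<n. \<Sum>l<p. b l * (D k i * D l i)) = (\<Sum>l<p. b l * inner_n n (D k) (D l))"
    by (subst sum.swap) (simp add: inner_n_def sum_distrib_left)
  finally show ?thesis .
qed

lemma obj_shift:
  "ridge_obj n p lam y D (\<lambda>k. b k + d k) = ridge_obj n p lam y D b + (\<Sum>i<n. (Xv p D d i)\<^sup>2)
     + lam * (\<Sum>k<p. (d k)\<^sup>2)
     - 2 * (\<Sum>k<p. d k * (inner_n n (D k) (\<lambda>i. y i - Xv p D b i) - lam * b k))"
proof -
  define r where "r = (\<lambda>i. y i - Xv p D b i)"
  have Xadd: "Xv p D (\<lambda>k. b k + d k) i = Xv p D b i + Xv p D d i" for i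
    unfolding Xv_def by (simp add: algebra_simps sum.distrib)
  have s1: "(\<Sum>i<n. (y i - Xv p D (\<lambda>k. b k + d k) i)\<^sup>2)
      = (\<Sum>i<n. (r i)\<^sup>2) - 2 * (\<Sum>i<n. r i * Xv p D d i) + (\<Sum>i<n. (Xv p D d i)\<^sup>2)"
    unfolding Xadd r_def
    by (simp add: power2_eq_square algebra_simps sum.distrib sum_subtractf sum_distrib_left)
  have s2: "(\<Sum>i<n. r i * Xv p D d i) = (\<Sum>k<p. d k * inner_n n (D k) r)"
  proof -
    have "(\<Sum>i<n. r i * Xv p D d i) = (\<Sum>i<n. \<Sum>k<p. d k * (D k i * r i))"
      unfolding Xv_def by (simp add: sum_distrib_left algebra_simps)
    also have "\<dots> = (\<Sum>k<p. d k * inner_n n (D k) r)"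
      by (subst sum.swap) (simp add: inner_n_def sum_distrib_left)
    finally show ?thesis .
  qed
  have s3: "(\<Sum>k<p. (b k + d k)\<^sup>2) = (\<Sum>k<p. (b k)\<^sup>2) + 2 * (\<Sum>k<p. d k * b k) + (\<Sum>k<p. (d k)\<^sup>2)"
    by (simp add: power2_eq_square algebra_simps sum.distrib sum_distrib_left)
  have s4: "(\<Sum>k<p. d k * (inner_n n (D k) r - lam * b k)) = (\<Sum>k<p. d k * inner_n n (D k) r) - lam * (\<Sum>k<p. d k * b k)"
    by (simp add: algebra_simps sum_subtractf sum_distrib_left)
  show ?thesis
    unfolding ridge_obj_Xv s1 s3 r_def[symmetric] s4 s2
    by (simp add: algebra_simps r_def)
qed

lemma inv_ex:
  fixes A :: "real mat"
  assumes A: "A \<in> carrier_mat p p" and inj: "\<And>v. v \<in> carrier_vec p \<Longrightarrow> A *\<^sub>v v = 0\<^sub>v p \<Longrightarrow> v = 0\<^sub>v p"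
  shows "\<exists>B\<in>carrier_mat p p. A * B = 1\<^sub>m p"
proof -
  have "det A \<noteq> 0" using det_0_iff_vec_prod_zero[OF A] inj by auto
  from det_non_zero_imp_unit[OF A this, of undefined]
  show ?thesis unfolding Units_def ring_mat_def by auto
qed

lemma sum_if_mult: "(k::nat) < p \<Longrightarrow> (\<Sum>l<p. (if k = l then a else 0) * f l) = (a::real) * f k"
proof -
  assume k: "k < p"
  have "(\<Sum>l<p. (if k = l then a else 0) * f l) = (\<Sum>l<p. if k = l then a * f l else 0)"
    by (rule sum.cong) auto
  also have "\<dots> = a * f k" using k by simp
  finally show ?thesis .
qed

lemma sum_if_add: "(k::nat) < p \<Longrightarrow> (\<Sum>l<p. (g l + (if k = l then a else 0)) * f l) = (\<Sum>l<p. g l * f l) + (a::real) * f k"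
  by (simp add: distrib_right sum.distrib sum_if_mult)

lemma ridge_solution:
  assumes rank: "full_column_rank n p x" and lam: "lam \<ge> 0"
  obtains Bf :: "nat \<Rightarrow> nat \<Rightarrow> real" where
   "\<And>D y k. (\<forall>k<p. \<forall>l<p. inner_n n (D k) (D l) = inner_n n (x k) (x l)) \<Longrightarrow> k < p \<Longrightarrow>
       ridge_coef n p lam y D k = (\<Sum>l<p. Bf k l * inner_n n (D l) y)"
proof -
  define G where "G k l = inner_n n (x k) (x l)" for k l
  have quad_nonneg: "0 \<le> (\<Sum>k<p. \<Sum>l<p. d k * d l * G k l)" for d
    unfolding G_def quad_eq[symmetric] by (simp add: sum_nonneg)
  have quad_zero: "\<forall>k<p. d k = 0" if "(\<Sum>k<p. \<Sum>l<p. d k * d l * G k l) = 0" for d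
  proof -
    have "(\<Sum>i<n. (Xv p x d i)\<^sup>2) = 0" using that unfolding G_def quad_eq .
    then have "\<forall>i<n. Xv p x d i = 0"
      by (subst (asm) sum_nonneg_eq_0_iff) auto
    then show ?thesis using rank unfolding full_column_rank_def Xv_def by blast
  qed
  define A where "A = mat p p (\<lambda>(k,l). G k l + (if k = l then lam else 0))"
  have Ac: "A \<in> carrier_mat p p" unfolding A_def by simp
  have Av: "(A *\<^sub>v v) $ k = (\<Sum>l<p. G k l * v $ l) + lam * v $ k" if "k < p" "v \<in> carrier_vec p" for v k
  proof -
    have "(A *\<^sub>v v) $ k = (\<Sum>l\<in>{0..<p}. (G k l + (if k = l then lam else 0)) * v $ l)"
      using that by (simp add: A_def scalar_prod_def)
    also have "\<dots> = (\<Sum>l<p. G k l * v $ l) + lam * v $ k"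
      using that by (simp add: atLeast0LessThan sum_if_add)
    finally show ?thesis .
  qed
  have inj: "v = 0\<^sub>v p" if v: "v \<in> carrier_vec p" and Az: "A *\<^sub>v v = 0\<^sub>v p" for v
  proof -
    define d where "d k = v $ k" for k
    have eq: "(\<Sum>l<p. G k l * d l) + lam * d k = 0" if "k < p" for k
      using Av[OF that v] Az that by (simp add: d_def)
    have "0 = (\<Sum>k<p. d k * ((\<Sum>l<p. G k l * d l) + lam * d k))"
      using eq by simp
    also have "\<dots> = (\<Sum>k<p. \<Sum>l<p. d k * d l * G k l) + lam * (\<Sum>k<p. (d k)\<^sup>2)"
      by (simp add: algebra_simps sum.distrib sum_distrib_left power2_eq_square)
    finally have "(\<Sum>k<p. \<Sum>l<p. d k * d l * G k l) + lam * (\<Sum>k<p. (d k)\<^sup>2) = 0" by simp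
    moreover have "0 \<le> lam * (\<Sum>k<p. (d k)\<^sup>2)" using lam by (simp add: sum_nonneg)
    ultimately have "(\<Sum>k<p. \<Sum>l<p. d k * d l * G k l) = 0" using quad_nonneg[of d] by linarith
    then have "\<forall>k<p. d k = 0" by (rule quad_zero)
    then show ?thesis using v by (intro eq_vecI) (auto simp: d_def)
  qed
  obtain B where Bc: "B \<in> carrier_mat p p" and AB: "A * B = 1\<^sub>m p"
    using inv_ex[OF Ac inj] by blast
  have ABe: "(\<Sum>l<p. (G k l + (if k = l then lam else 0)) * B $$ (l, m)) = (if k = m then 1 else 0)"
    if "k < p" "m < p" for k m
  proof -
    have "(A * B) $$ (k, m) = (\<Sum>l<p. (G k l + (if k = l then lam else 0)) * B $$ (l, m))"
      using that Bc Ac by (simp add: A_def scalar_prod_def atLeast0LessThan)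
    then show ?thesis using AB that by simp
  qed
  define Bf where "Bf k l = B $$ (k, l)" for k l
  show ?thesis
  proof (rule that)
    fix D :: "nat \<Rightarrow> nat \<Rightarrow> real" and y k
    assume gram: "\<forall>k<p. \<forall>l<p. inner_n n (D k) (D l) = inner_n n (x k) (x l)" and k: "k < p"
    define c where "c l = inner_n n (D l) y" for l
    define bs where "bs k = (if k < p then (\<Sum>l<p. Bf k l * c l) else 0)" for k
    have normal: "(\<Sum>l<p. G k l * bs l) + lam * bs k = c k" if "k < p" for k
    proof -
      have "(\<Sum>l<p. G k l * bs l) + lam * bs k = (\<Sum>l<p. (G k l + (if k = l then lam else 0)) * bs l)"
        using that by (simp add: sum_if_add)
      also have "\<dots> = (\<Sum>l<p. \<Sum>m<p. (G k l + (if k = l then lam else 0)) * B $$ (l, m) * c m)"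
        by (intro sum.cong refl) (simp add: bs_def Bf_def sum_distrib_left mult.assoc)
      also have "\<dots> = (\<Sum>m<p. (\<Sum>l<p. (G k l + (if k = l then lam else 0)) * B $$ (l, m)) * c m)"
        by (subst sum.swap) (simp add: sum_distrib_right)
      also have "\<dots> = (\<Sum>m<p. (if k = m then 1 else 0) * c m)"
        using that by (intro sum.cong refl) (simp add: ABe)
      also have "\<dots> = c k" using that sum_if_mult[OF that, of 1 c] by simp
      finally show ?thesis .
    qed
    have cross: "inner_n n (D k) (\<lambda>i. y i - Xv p D bs i) - lam * bs k = 0" if "k < p" for k
    proof -
      have "inner_n n (D k) (\<lambda>i. y i - Xv p D bs i) = c k - (\<Sum>l<p. bs l * G k l)"
        unfolding inner_resid c_def G_def using gram that by simp
      then show ?thesis using normal[OF that] by (simp add: mult.commute)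
    qed
    have shift: "ridge_obj n p lam y D b' = ridge_obj n p lam y D bs + (\<Sum>i<n. (Xv p D (\<lambda>k. b' k - bs k) i)\<^sup>2)
        + lam * (\<Sum>k<p. (b' k - bs k)\<^sup>2)" for b'
    proof -
      have "b' = (\<lambda>k. bs k + (b' k - bs k))" by simp
      then have "ridge_obj n p lam y D b' = ridge_obj n p lam y D (\<lambda>k. bs k + (b' k - bs k))" by simp
      also have "\<dots> = ridge_obj n p lam y D bs + (\<Sum>i<n. (Xv p D (\<lambda>k. b' k - bs k) i)\<^sup>2)
        + lam * (\<Sum>k<p. (b' k - bs k)\<^sup>2)"
        unfolding obj_shift using cross by simp
      finally show ?thesis .
    qed
    have dnn: "0 \<le> (\<Sum>i<n. (Xv p D d i)\<^sup>2) + lam * (\<Sum>k<p. (d k)\<^sup>2)" for d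
      using lam by (intro add_nonneg_nonneg mult_nonneg_nonneg sum_nonneg) auto
    have "ridge_coef n p lam y D = bs"
      unfolding ridge_coef_def
    proof (rule the_equality)
      show "(\<forall>k\<ge>p. bs k = 0) \<and> (\<forall>b'. (\<forall>k\<ge>p. b' k = 0) \<longrightarrow> ridge_obj n p lam y D bs \<le> ridge_obj n p lam y D b')"
      proof (intro conjI allI impI)
        fix k :: nat assume "p \<le> k" then show "bs k = 0" by (simp add: bs_def)
      next
        fix b' :: "nat \<Rightarrow> real"
        show "ridge_obj n p lam y D bs \<le> ridge_obj n p lam y D b'"
          using shift[of b'] dnn[of "\<lambda>k. b' k - bs k"] by linarith
      qed
    next
      fix b' assume b': "(\<forall>k\<ge>p. b' k = 0) \<and> (\<forall>b''. (\<forall>k\<ge>p. b'' k = 0) \<longrightarrow> ridge_obj n p lam y D b' \<le> ridge_obj n p lam y D b'')"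
      have bsupp: "\<forall>k\<ge>p. bs k = 0" by (simp add: bs_def)
      have le: "ridge_obj n p lam y D b' \<le> ridge_obj n p lam y D bs" using b' bsupp by blast
      define d where "d = (\<lambda>k. b' k - bs k)"
      have "(\<Sum>i<n. (Xv p D d i)\<^sup>2) + lam * (\<Sum>k<p. (d k)\<^sup>2) \<le> 0"
        unfolding d_def using le shift[of b'] by simp
      moreover have "0 \<le> lam * (\<Sum>k<p. (d k)\<^sup>2)" using lam by (simp add: sum_nonneg)
      moreover have "0 \<le> (\<Sum>i<n. (Xv p D d i)\<^sup>2)" by (simp add: sum_nonneg)
      ultimately have "(\<Sum>i<n. (Xv p D d i)\<^sup>2) = 0" by linarith
      then have "(\<Sum>k<p. \<Sum>l<p. d k * d l * G k l) = 0"
        unfolding quad_eq G_def using gram by simp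
      then have "\<forall>k<p. d k = 0" by (rule quad_zero)
      then have dz: "\<forall>k<p. d k = 0" .
      show "b' = bs"
      proof (rule ext)
        fix k show "b' k = bs k"
        proof (cases "k < p")
          case True then show ?thesis using dz by (simp add: d_def)
        next
          case False then show ?thesis using b' bsupp by simp
        qed
      qed
    qed
    then show "ridge_coef n p lam y D k = (\<Sum>l<p. Bf k l * inner_n n (D l) y)"
      using k by (simp add: bs_def c_def)
  qed
qed

lemma inner_diff_right: "inner_n n v (\<lambda>i. a i - b i) = inner_n n v a - inner_n n v b"
  unfolding inner_n_def by (simp add: algebra_simps sum_subtractf)

lemma inner_diff_left: "inner_n n (\<lambda>i. a i - b i) v = inner_n n a v - inner_n n b v"
  unfolding inner_n_def by (simp add: algebra_simps sum_subtractf)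

lemma refl_inner:
  "inner_n n v (hrefl n u z) = inner_n n v z - 2 * (inner_n n u z / inner_n n u u) * inner_n n v u"
proof -
  define k where "k = 2 * (inner_n n u z / inner_n n u u)"
  have "inner_n n v (hrefl n u z) = (\<Sum>i<n. v i * (z i - k * u i))"
    unfolding hrefl_def k_def by (simp add: inner_n_def)
  also have "\<dots> = inner_n n v z - k * inner_n n v u"
    by (simp add: inner_n_def algebra_simps sum_subtractf sum_distrib_left)
  finally show ?thesis by (simp add: k_def)
qed

lemma response_inner:
  "inner_n n v (response p x \<beta> z) = inner_n n v (\<lambda>i. \<Sum>k<p. \<beta> k * x k i) + inner_n n v z"
  unfolding response_def inner_n_def by (simp add: algebra_simps sum.distrib)

lemma refl_swap:
  assumes na: "inner_n n va va = 1" and nb: "inner_n n vb vb = 1"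
  defines "u \<equiv> \<lambda>i. va i - vb i"
  shows "inner_n n va (hrefl n u z) = inner_n n vb z"
    and "inner_n n vb (hrefl n u z) = inner_n n va z"
proof -
  have sab: "inner_n n vb va = inner_n n va vb" by (rule inner_n_sym)
  have N: "inner_n n u u = 2 - 2 * inner_n n va vb"
    unfolding u_def inner_diff_left inner_diff_right using na nb sab by simp
  have ua: "inner_n n va u = 1 - inner_n n va vb"
    unfolding u_def inner_diff_right using na by simp
  have ub: "inner_n n vb u = inner_n n va vb - 1"
    unfolding u_def inner_diff_right using nb sab by simp
  have t: "inner_n n u z = inner_n n va z - inner_n n vb z"
    unfolding u_def inner_diff_left ..
  have "inner_n n va (hrefl n u z) = inner_n n vb z \<and> inner_n n vb (hrefl n u z) = inner_n n va z"
  proof (cases "inner_n n u u = 0")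
    case True
    then have "\<forall>i<n. u i = 0"
      unfolding inner_n_def by (subst (asm) sum_nonneg_eq_0_iff) auto
    then have "inner_n n u z = 0" unfolding inner_n_def by simp
    then show ?thesis using True t by (simp add: refl_inner)
  next
    case False
    then show ?thesis unfolding refl_inner N ua ub t
      by (simp add: field_simps)
  qed
  then show "inner_n n va (hrefl n u z) = inner_n n vb z" and "inner_n n vb (hrefl n u z) = inner_n n va z"
    by auto
qed

lemma card_filter_sum: "finite S \<Longrightarrow> real (card {l\<in>S. P l}) = (\<Sum>l\<in>S. if P l then 1 else 0)"
proof (induction S rule: finite_induct)
  case empty then show ?case by simp
next
  case (insert a S)
  have "{l \<in> insert a S. P l} = (if P a then insert a {l\<in>S. P l} else {l\<in>S. P l})" by auto
  then show ?case using insert by (simp add: card_insert_if)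
qed

lemma inner_lincomb:
  "inner_n n (\<lambda>i. \<Sum>k<p. \<beta> k * x k i) v = (\<Sum>k<p. \<beta> k * inner_n n (x k) v)"
proof -
  have "(\<Sum>i<n. (\<Sum>k<p. \<beta> k * x k i) * v i) = (\<Sum>i<n. \<Sum>k<p. \<beta> k * (x k i * v i))"
    by (simp add: sum_distrib_right mult.assoc)
  also have "\<dots> = (\<Sum>k<p. \<Sum>i<n. \<beta> k * (x k i * v i))" by (rule sum.swap)
  also have "\<dots> = (\<Sum>k<p. \<beta> k * (\<Sum>i<n. x k i * v i))" by (simp add: sum_distrib_left)
  finally show ?thesis unfolding inner_n_def .
qed

lemma sets_G: "sets (gauss_noise n \<sigma>) = sets (LB {..<n})"
  unfolding gauss_noise_def by (intro sets_PiM_cong) simp_all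

lemma space_G: "space (gauss_noise n \<sigma>) = space (LB {..<n})"
  using sets_G by (rule sets_eq_imp_space_eq)

lemma comp_meas_G: "i < n \<Longrightarrow> (\<lambda>z. z i) \<in> borel_measurable (gauss_noise n \<sigma>)"
  unfolding measurable_cong_sets[OF sets_G refl] by simp

lemma inner_resp_meas:
  "(\<lambda>z. inner_n n v (response p x \<beta> z)) \<in> borel_measurable (gauss_noise n \<sigma>)"
proof -
  have "(\<lambda>z. inner_n n v (response p x \<beta> z)) = (\<lambda>z. \<Sum>i<n. v i * ((\<Sum>k<p. \<beta> k * x k i) + z i))"
    unfolding inner_n_def response_def ..
  also have "\<dots> \<in> borel_measurable (gauss_noise n \<sigma>)"
    by (intro borel_measurable_sum borel_measurable_times borel_measurable_add borel_measurable_const comp_meas_G) auto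
  finally show ?thesis .
qed

lemma rank_unique:
  fixes f :: "nat \<Rightarrow> real" and S :: "nat set"
  assumes S: "finite S" and inj: "\<forall>m\<in>S. \<forall>l\<in>S. m \<noteq> l \<longrightarrow> f m \<noteq> f l" and r: "r < card S"
  shows "card {m\<in>S. card {l\<in>S. l \<noteq> m \<and> f m \<le> f l} = r} = 1"
proof -
  define R where "R m = card {l\<in>S. f m < f l}" for m
  have RR: "card {l\<in>S. l \<noteq> m \<and> f m \<le> f l} = R m" if "m \<in> S" for m
  proof -
    have "{l\<in>S. l \<noteq> m \<and> f m \<le> f l} = {l\<in>S. f m < f l}"
      using inj that by force
    then show ?thesis by (simp add: R_def)
  qed
  have lt: "R m' < R m" if "m \<in> S" "m' \<in> S" "f m < f m'" for m m'
  proof -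
    have "{l\<in>S. f m' < f l} \<subset> {l\<in>S. f m < f l}"
      using that by auto
    then show ?thesis unfolding R_def using S by (intro psubset_card_mono) auto
  qed
  have Rinj: "inj_on R S"
  proof (rule inj_onI)
    fix m m' assume m: "m \<in> S" "m' \<in> S" "R m = R m'"
    show "m = m'"
    proof (rule ccontr)
      assume "m \<noteq> m'"
      then have "f m \<noteq> f m'" using inj m by blast
      then have "f m < f m' \<or> f m' < f m" by linarith
      then show False using lt m by (metis less_irrefl)
    qed
  qed
  have Rrange: "R ` S \<subseteq> {..<card S}"
  proof
    fix v assume "v \<in> R ` S"
    then obtain m where m: "m \<in> S" "v = R m" by auto
    have "{l\<in>S. f m < f l} \<subseteq> S - {m}" by auto
    then have "R m \<le> card (S - {m})" unfolding R_def using S by (intro card_mono) auto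
    also have "\<dots> < card S" using m S by (intro card_Diff1_less)
    finally show "v \<in> {..<card S}" using m by simp
  qed
  have "card (R ` S) = card {..<card S}" using card_image[OF Rinj] by simp
  then have img: "R ` S = {..<card S}" using Rrange by (intro card_subset_eq) auto
  then obtain m0 where m0: "m0 \<in> S" "R m0 = r" using r by (metis imageE lessThan_iff)
  have "{m\<in>S. card {l\<in>S. l \<noteq> m \<and> f m \<le> f l} = r} = {m0}"
  proof
    show "{m\<in>S. card {l\<in>S. l \<noteq> m \<and> f m \<le> f l} = r} \<subseteq> {m0}"
      using RR m0 Rinj by (auto dest: inj_onD)
    show "{m0} \<subseteq> {m\<in>S. card {l\<in>S. l \<noteq> m \<and> f m \<le> f l} = r}"
      using RR m0 by auto
  qed
  then show ?thesis by simp
qed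

theorem lemma2p2:
  fixes n p M :: nat and \<sigma> lam :: real
    and x :: "nat \<Rightarrow> nat \<Rightarrow> real"          (* column k of X is x k *)
    and xt :: "nat \<Rightarrow> nat \<Rightarrow> nat \<Rightarrow> real"    (* xt j m = m-th substitute vector for x_j *)
    and \<beta> s :: "nat \<Rightarrow> real"
    and j :: nat
  assumes sigma_pos: "\<sigma> > 0"
    and rank: "full_column_rank n p x"
    and unit: "\<forall>k<p. inner_n n (x k) (x k) = 1"
    and M_ge: "M \<ge> 1"
    and lam_nonneg: "lam \<ge> 0"
    and xt_other: "\<forall>jj<p. \<forall>m\<in>{1..M}. \<forall>i<p. i \<noteq> jj \<longrightarrow>
                     inner_n n (x i) (xt jj m) = inner_n n (x i) (x jj)"
    and xt_self: "\<forall>jj<p. \<forall>m\<in>{1..M}. inner_n n (x jj) (xt jj m) = 1 - s jj"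
    and xt_norm: "\<forall>jj<p. \<forall>m\<in>{1..M}. inner_n n (xt jj m) (xt jj m) = 1"
    and xt_pair: "\<forall>jj<p. \<forall>m\<in>{1..M}. \<forall>l\<in>{1..M}. l \<noteq> m \<longrightarrow>
                     inner_n n (xt jj m) (xt jj l) = 1 - s jj"
    and no_ties: "\<forall>jj<p. AE z in gauss_noise n \<sigma>.
                     \<forall>m\<in>{0..M}. \<forall>l\<in>{0..M}. m \<noteq> l \<longrightarrow>
                       \<bar>bhat n p lam x xt \<beta> jj m z\<bar> \<noteq> \<bar>bhat n p lam x xt \<beta> jj l z\<bar>"
    and j_lt: "j < p"
    and null: "\<beta> j = 0"
  shows "\<forall>k\<in>{1..M+1}.
           measure (gauss_noise n \<sigma>)
             {z \<in> space (gauss_noise n \<sigma>). pval n p lam x xt \<beta> M j z = real k / (real M + 1)}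
           = 1 / (real M + 1)"
proof (intro ballI)
  fix k assume k: "k \<in> {1..M+1}"
  let ?G = "gauss_noise n \<sigma>"
  let ?S = "{0..M}"
  interpret G: prob_space ?G
    unfolding gauss_noise_def by (intro prob_space_PiM prob_space_normal_density sigma_pos)
  obtain Bf where Bf: "\<And>D y k. (\<forall>k<p. \<forall>l<p. inner_n n (D k) (D l) = inner_n n (x k) (x l)) \<Longrightarrow> k < p \<Longrightarrow>
       ridge_coef n p lam y D k = (\<Sum>l<p. Bf k l * inner_n n (D l) y)"
    using ridge_solution[OF rank lam_nonneg] by blast
  define w where "w m = (if m = 0 then x j else xt j m)" for m
  define D where "D m = x(j := w m)" for m
  have bhD: "bhat n p lam x xt \<beta> j m z = ridge_coef n p lam (response p x \<beta> z) (D m) j" for m z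
    by (simp add: bhat_def D_def w_def)
  have xts: "inner_n n (xt j m) (x j) = 1 - s j" if "m \<in> {1..M}" for m
    using xt_self j_lt that inner_n_sym by metis
  have wn: "inner_n n (w m) (w m) = 1" if "m \<in> ?S" for m
    using unit xt_norm j_lt that by (cases "m = 0") (auto simp: w_def)
  have wx: "inner_n n (w m) (x l) = inner_n n (x j) (x l)" if "m \<in> ?S" "l < p" "l \<noteq> j" for m l
  proof (cases "m = 0")
    case True then show ?thesis by (simp add: w_def)
  next
    case False
    then have m: "m \<in> {1..M}" using that by auto
    have "inner_n n (w m) (x l) = inner_n n (x l) (xt j m)" using False by (simp add: w_def inner_n_sym)
    also have "\<dots> = inner_n n (x l) (x j)" using xt_other j_lt m that by blast
    finally show ?thesis by (simp add: inner_n_sym)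
  qed
  have gram: "\<forall>k<p. \<forall>l<p. inner_n n (D m k) (D m l) = inner_n n (x k) (x l)" if m: "m \<in> ?S" for m
  proof (intro allI impI)
    fix k l assume kl: "k < p" "l < p"
    show "inner_n n (D m k) (D m l) = inner_n n (x k) (x l)"
    proof (cases "k = j")
      case True
      show ?thesis
      proof (cases "l = j")
        case True then show ?thesis using \<open>k = j\<close> wn[OF m] unit j_lt by (simp add: D_def)
      next
        case False then show ?thesis using \<open>k = j\<close> wx[OF m kl(2)] by (simp add: D_def)
      qed
    next
      case False
      show ?thesis
      proof (cases "l = j")
        case True then show ?thesis using False wx[OF m kl(1) False] by (simp add: D_def inner_n_sym)
      next
        case lF: False then show ?thesis using False by (simp add: D_def)
      qed
    qed
  qed
  have bform: "bhat n p lam x xt \<beta> j m z = (\<Sum>l<p. Bf j l * inner_n n (D m l) (response p x \<beta> z))"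
    if "m \<in> ?S" for m z
    unfolding bhD using Bf[OF gram[OF that] j_lt] .
  have bmeas: "(\<lambda>z. bhat n p lam x xt \<beta> j m z) \<in> borel_measurable ?G" if "m \<in> ?S" for m
    unfolding bform[OF that] by (intro borel_measurable_sum borel_measurable_times borel_measurable_const inner_resp_meas)
  define bv where "bv m z = \<bar>bhat n p lam x xt \<beta> j m z\<bar>" for m z
  define R where "R m z = card {l\<in>?S. l \<noteq> m \<and> bv m z \<le> bv l z}" for m z
  define E where "E m = {z \<in> space ?G. R m z = k - 1}" for m
  have bvmeas: "(\<lambda>z. bv m z) \<in> borel_measurable ?G" if "m \<in> ?S" for m
    unfolding bv_def by (intro borel_measurable_abs bmeas that)
  have Rmeas: "(\<lambda>z. real (R m z)) \<in> borel_measurable ?G" if mS: "m \<in> ?S" for m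
  proof -
    have "(\<lambda>z. real (R m z)) = (\<lambda>z. \<Sum>l\<in>?S. if l \<noteq> m \<and> bv m z \<le> bv l z then 1 else 0)"
    proof (rule ext)
      fix z show "real (R m z) = (\<Sum>l\<in>?S. if l \<noteq> m \<and> bv m z \<le> bv l z then 1 else 0)"
        unfolding R_def by (rule card_filter_sum) simp
    qed
    also have "\<dots> \<in> borel_measurable ?G"
    proof (intro borel_measurable_sum)
      fix l assume l: "l \<in> ?S"
      show "(\<lambda>z. if l \<noteq> m \<and> bv m z \<le> bv l z then 1 else 0 :: real) \<in> borel_measurable ?G"
      proof (cases "l = m")
        case True then show ?thesis by simp
      next
        case False
        have "{z \<in> space ?G. bv m z \<le> bv l z} \<in> sets ?G"
          using bvmeas[OF mS] bvmeas[OF l] by (rule borel_measurable_le)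
        then show ?thesis using False by (simp add: measurable_If_set)
      qed
    qed
    finally show ?thesis .
  qed
  have Emeas: "E m \<in> sets ?G" if mS: "m \<in> ?S" for m
  proof -
    have "E m = (\<lambda>z. real (R m z)) -` {real (k - 1)} \<inter> space ?G"
      by (auto simp: E_def)
    also have "\<dots> \<in> sets ?G"
      by (intro measurable_sets[OF Rmeas[OF mS]] borel_closed) simp
    finally show ?thesis .
  qed
  have pv: "pval n p lam x xt \<beta> M j z = (1 + real (R 0 z)) / (real M + 1)" for z
  proof -
    have "{m \<in> {1..M}. \<bar>bhat n p lam x xt \<beta> j m z\<bar> \<ge> \<bar>bhat n p lam x xt \<beta> j 0 z\<bar>}
        = {l\<in>?S. l \<noteq> 0 \<and> bv 0 z \<le> bv l z}"
      by (auto simp: bv_def)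
    then show ?thesis by (simp add: pval_def R_def)
  qed
  have pE: "{z \<in> space ?G. pval n p lam x xt \<beta> M j z = real k / (real M + 1)} = E 0"
  proof -
    have "pval n p lam x xt \<beta> M j z = real k / (real M + 1) \<longleftrightarrow> R 0 z = k - 1" for z
    proof -
      have "pval n p lam x xt \<beta> M j z = real k / (real M + 1) \<longleftrightarrow> 1 + real (R 0 z) = real k"
        unfolding pv by (simp add: divide_cancel_right add_pos_pos)
      also have "\<dots> \<longleftrightarrow> R 0 z = k - 1" using k by auto
      finally show ?thesis .
    qed
    then show ?thesis by (auto simp: E_def)
  qed
  have inv: "measure ?G (E m) = measure ?G (E 0)" if m: "m \<in> {1..M}" for m
  proof -
    define u where "u = (\<lambda>i. w 0 i - w m i)"
    define \<tau> where "\<tau> l = (if l = 0 then m else if l = m then 0 else l)" for l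
    have m0: "m \<noteq> 0" "m \<in> ?S" using m by auto
    have xu: "inner_n n (x k') u = 0" if "k' < p" "k' \<noteq> j" for k'
    proof -
      have "inner_n n (x k') (xt j m) = inner_n n (x k') (x j)" using xt_other j_lt m that by blast
      then show ?thesis unfolding u_def inner_diff_right using m0 by (simp add: w_def)
    qed
    have wu: "inner_n n (w l) u = 0" if l: "l \<in> ?S" "l \<noteq> 0" "l \<noteq> m" for l
    proof -
      have l1: "l \<in> {1..M}" using l by auto
      have xp: "\<And>a b. a \<in> {1..M} \<Longrightarrow> b \<in> {1..M} \<Longrightarrow> b \<noteq> a \<Longrightarrow> inner_n n (xt j a) (xt j b) = 1 - s j"
        using xt_pair j_lt by blast
      have "inner_n n (xt j l) (xt j m) = 1 - s j" using xp[OF l1 m] l(3) by simp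
      moreover have "inner_n n (xt j l) (x j) = 1 - s j" using xts[OF l1] .
      ultimately show ?thesis unfolding u_def inner_diff_right using m0 l by (simp add: w_def)
    qed
    let ?Xb = "\<lambda>i. \<Sum>k<p. \<beta> k * x k i"
    have Xu: "inner_n n ?Xb u = 0"
      unfolding inner_lincomb
    proof (rule sum.neutral, intro ballI)
      fix k' assume "k' \<in> {..<p}"
      then show "\<beta> k' * inner_n n (x k') u = 0" using xu null by (cases "k' = j") auto
    qed
    have Xw: "inner_n n (w 0) ?Xb = inner_n n (w m) ?Xb"
      using Xu unfolding u_def inner_diff_right by (simp add: inner_n_sym)
    let ?Q = "hrefl n u"
    have sw1: "inner_n n (w 0) (?Q z) = inner_n n (w m) z" for z
      unfolding u_def by (rule refl_swap(1)[OF wn wn]) (use m0 in auto)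
    have sw2: "inner_n n (w m) (?Q z) = inner_n n (w 0) z" for z
      unfolding u_def by (rule refl_swap(2)[OF wn wn]) (use m0 in auto)
    have keep: "inner_n n v (?Q z) = inner_n n v z" if "inner_n n v u = 0" for v z
      using that by (simp add: refl_inner)
    have \<tau>S: "\<tau> l \<in> ?S" if "l \<in> ?S" for l using that m0 by (auto simp: \<tau>_def)
    have swap: "bhat n p lam x xt \<beta> j l (?Q z) = bhat n p lam x xt \<beta> j (\<tau> l) z" if l: "l \<in> ?S" for l z
      unfolding bform[OF l] bform[OF \<tau>S[OF l]]
    proof (rule sum.cong[OF refl])
      fix k' assume k': "k' \<in> {..<p}"
      have "inner_n n (D l k') (response p x \<beta> (?Q z)) = inner_n n (D (\<tau> l) k') (response p x \<beta> z)"
      proof (cases "k' = j")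
        case True
        have Dl: "D l k' = w l" "D (\<tau> l) k' = w (\<tau> l)" using True by (simp_all add: D_def)
        show ?thesis unfolding Dl response_inner
        proof (cases "l = 0")
          case True then show "inner_n n (w l) ?Xb + inner_n n (w l) (?Q z) = inner_n n (w (\<tau> l)) ?Xb + inner_n n (w (\<tau> l)) z"
            using Xw sw1 by (simp add: \<tau>_def)
        next
          case l0: False
          show "inner_n n (w l) ?Xb + inner_n n (w l) (?Q z) = inner_n n (w (\<tau> l)) ?Xb + inner_n n (w (\<tau> l)) z"
          proof (cases "l = m")
            case True then show ?thesis using Xw sw2 m0 by (simp add: \<tau>_def)
          next
            case False then show ?thesis using keep[OF wu[OF l l0 False]] l0 by (simp add: \<tau>_def)
          qed
        qed
      next
        case False
        have Dl: "D l k' = x k'" "D (\<tau> l) k' = x k'" using False by (simp_all add: D_def)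
        show ?thesis unfolding Dl response_inner using keep[OF xu] False k' by simp
      qed
      then show "Bf j k' * inner_n n (D l k') (response p x \<beta> (?Q z)) = Bf j k' * inner_n n (D (\<tau> l) k') (response p x \<beta> z)"
        by simp
    qed
    have bvs: "bv l (?Q z) = bv (\<tau> l) z" if "l \<in> ?S" for l z
      unfolding bv_def using swap[OF that] by simp
    have ttau: "\<tau> (\<tau> l) = l" for l using m0 by (auto simp: \<tau>_def)
    have Rswap: "R 0 (?Q z) = R m z" for z
    proof -
      have b0: "bv 0 (?Q z) = bv m z" using bvs[of 0 z] m0 by (simp add: \<tau>_def)
      have tm: "\<tau> l = m \<longleftrightarrow> l = 0" for l using m0 by (auto simp: \<tau>_def)
      have t0: "\<tau> l = 0 \<longleftrightarrow> l = m" for l using m0 by (auto simp: \<tau>_def)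
      have "{l\<in>?S. l \<noteq> 0 \<and> bv 0 (?Q z) \<le> bv l (?Q z)} = {l\<in>?S. l \<noteq> 0 \<and> bv m z \<le> bv (\<tau> l) z}"
      proof (rule Collect_cong)
        fix l show "(l \<in> ?S \<and> l \<noteq> 0 \<and> bv 0 (?Q z) \<le> bv l (?Q z)) = (l \<in> ?S \<and> l \<noteq> 0 \<and> bv m z \<le> bv (\<tau> l) z)"
          using b0 bvs[of l z] by auto
      qed
      also have "\<dots> = \<tau> ` {l\<in>?S. l \<noteq> m \<and> bv m z \<le> bv l z}"
      proof
        show "{l\<in>?S. l \<noteq> 0 \<and> bv m z \<le> bv (\<tau> l) z} \<subseteq> \<tau> ` {l\<in>?S. l \<noteq> m \<and> bv m z \<le> bv l z}"
        proof
          fix l assume l: "l \<in> {l\<in>?S. l \<noteq> 0 \<and> bv m z \<le> bv (\<tau> l) z}"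
          then have "\<tau> l \<in> {l\<in>?S. l \<noteq> m \<and> bv m z \<le> bv l z}"
            using \<tau>S[of l] tm[of l] by blast
          then have "\<tau> (\<tau> l) \<in> \<tau> ` {l\<in>?S. l \<noteq> m \<and> bv m z \<le> bv l z}" by (rule imageI)
          then show "l \<in> \<tau> ` {l\<in>?S. l \<noteq> m \<and> bv m z \<le> bv l z}" by (simp only: ttau)
        qed
        show "\<tau> ` {l\<in>?S. l \<noteq> m \<and> bv m z \<le> bv l z} \<subseteq> {l\<in>?S. l \<noteq> 0 \<and> bv m z \<le> bv (\<tau> l) z}"
        proof
          fix l' assume "l' \<in> \<tau> ` {l\<in>?S. l \<noteq> m \<and> bv m z \<le> bv l z}"
          then obtain l where l: "l \<in> ?S" "l \<noteq> m" "bv m z \<le> bv l z" and l': "l' = \<tau> l" by blast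
          show "l' \<in> {l\<in>?S. l \<noteq> 0 \<and> bv m z \<le> bv (\<tau> l) z}"
            using l l' \<tau>S[OF l(1)] t0[of l] ttau[of l] by simp
        qed
      qed
      finally have "R 0 (?Q z) = card (\<tau> ` {l\<in>?S. l \<noteq> m \<and> bv m z \<le> bv l z})"
        by (simp add: R_def)
      also have "\<dots> = R m z"
        unfolding R_def by (rule card_image) (metis inj_onI ttau)
      finally show ?thesis .
    qed
    have Qsp: "?Q z \<in> space ?G" if "z \<in> space ?G" for z
      using measurable_space[OF refl_meas[of n u]] that by (simp add: space_G)
    have pre: "?Q -` E 0 \<inter> space ?G = E m"
      using Qsp Rswap by (auto simp: E_def)
    show ?thesis
      using gauss_refl_measure[OF sigma_pos Emeas[of 0], of u] pre by simp
  qed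
  have nt: "AE z in ?G. \<forall>m\<in>?S. \<forall>l\<in>?S. m \<noteq> l \<longrightarrow> bv m z \<noteq> bv l z"
    using no_ties j_lt unfolding bv_def by blast
  have AEsum: "AE z in ?G. (\<Sum>m\<in>?S. indicator (E m) z) = (1::real)"
    using nt AE_space
  proof eventually_elim
    case (elim z)
    have "(\<Sum>m\<in>?S. indicator (E m) z) = (\<Sum>m\<in>?S. if R m z = k - 1 then 1 else 0 :: real)"
      using elim(2) by (intro sum.cong refl) (simp add: E_def indicator_def)
    also have "\<dots> = real (card {m\<in>?S. R m z = k - 1})"
      by (rule card_filter_sum[symmetric]) simp
    also have "card {m\<in>?S. R m z = k - 1} = 1"
      unfolding R_def using k elim(1) by (intro rank_unique) auto
    finally show ?case by simp
  qed
  have sum1: "(\<Sum>m\<in>?S. measure ?G (E m)) = 1"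
  proof -
    have Esub: "E m \<inter> space ?G = E m" for m by (auto simp: E_def)
    have intg: "integrable ?G (indicator (E m) :: _ \<Rightarrow> real)" if "m \<in> ?S" for m
      by (intro integrable_real_indicator Emeas[OF that]) (simp add: less_top[symmetric])
    have "(\<Sum>m\<in>?S. measure ?G (E m)) = (\<Sum>m\<in>?S. integral\<^sup>L ?G (indicator (E m) :: _ \<Rightarrow> real))"
      by (simp add: Esub)
    also have "\<dots> = integral\<^sup>L ?G (\<lambda>z. \<Sum>m\<in>?S. indicator (E m) z :: real)"
      using Bochner_Integration.integral_sum[where M="?G" and I="?S" and f="\<lambda>m. indicator (E m) :: _ \<Rightarrow> real"] intg by simp
    also have "\<dots> = integral\<^sup>L ?G (\<lambda>z. 1 :: real)"
    proof (rule integral_cong_AE)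
      show "(\<lambda>z. \<Sum>m\<in>?S. indicator (E m) z :: real) \<in> borel_measurable ?G"
        using Emeas by (intro borel_measurable_sum borel_measurable_indicator) auto
    qed (use AEsum in auto)
    also have "\<dots> = 1" by (simp add: G.prob_space)
    finally show ?thesis .
  qed
  have "(\<Sum>m\<in>?S. measure ?G (E m)) = (\<Sum>m\<in>?S. measure ?G (E 0))"
  proof (rule sum.cong[OF refl])
    fix m assume "m \<in> ?S"
    then show "measure ?G (E m) = measure ?G (E 0)"
      using inv[of m] by (cases "m = 0") auto
  qed
  also have "\<dots> = (real M + 1) * measure ?G (E 0)" by simp
  finally have "(real M + 1) * measure ?G (E 0) = 1" using sum1 by simp
  then have "measure ?G (E 0) = 1 / (real M + 1)" by (simp add: field_simps)
  then show "measure ?G {z \<in> space ?G. pval n p lam x xt \<beta> M j z = real k / (real M + 1)} = 1 / (real M + 1)"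
    using pE by simp
qed

end
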